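(* Let $\mathcal{D}$ be a generalised dyadic system, $\nu$ a Radon measure on $\mathbb{R}$ dyadically doubling relative to $\mathcal{D}$, and $\mu = g\,d\nu$ with $g\ge0$, $g\in L^2(\nu)$. Then $$\sum_{I\in\mathcal{D},\ \nu(I)>0}\alpha^2_{\mu,\nu}(I)\frac{\mu(I)^2}{\nu(I)}\le C\|g\|^2_{L^2(\nu)},$$ where $C$ is an absolute constant.
   Context: A generalised dyadic system is a family $\mathcal{D}=\bigcup_{k\ge0}\mathcal{D}_k$ of half-open intervals such that each $\mathcal{D}_k$ is a partition of $\mathbb{R}$ into intervals of length $2^{-k}$, and each $I\in\mathcal{D}_k$ is the union of two intervals of $\mathcal{D}_{k+1}$. $\nu$ is dyadically doubling relative to $\mathcal{D}$ if $\nu(\hat I)\le C\nu(I)$ for every $I\in\mathcal{D}_k$, $k\ge1$, with $\hat I\in\mathcal{D}_{k-1}$ the interval containing $I$. Wasserstein distance: $\mathbb{W}_1(\nu_1,\nu_2) := \sup_\psi |\int\psi\,d\nu_1 - \int\psi\,d\nu_2|$ over all $1$-Lipschitz $\psi\colon\mathbb{R}\to\mathbb{R}$ supported on $[0,1]$. $T_I$ is the increasing affine map from $\overline I$ onto $[0,1]$, $\mu_I := T_{I\sharp}(\mu|_I)/\mu(I)$, $\nu_I := T_{I\sharp}(\nu|_I)/\nu(I)$ (zero if the mass vanishes), $\alpha_{\mu,\nu}(I) := \mathbb{W}_1(\mu_I,\nu_I)$. *)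

theory Defs
  imports "HOL-Analysis.Analysis"
begin

definition gen_dyadic_system :: "(nat \<Rightarrow> real set set) \<Rightarrow> bool" where
  "gen_dyadic_system D \<longleftrightarrow>
     (\<forall>k. (\<forall>I\<in>D k. \<exists>a. I = {a..<a + (1/2)^k}) \<and> (\<forall>x::real. \<exists>!I. I \<in> D k \<and> x \<in> I)) \<and>
     (\<forall>k. \<forall>I\<in>D k. \<exists>I1\<in>D (Suc k). \<exists>I2\<in>D (Suc k). I1 \<noteq> I2 \<and> I = I1 \<union> I2)"

definition radon_measure :: "real measure \<Rightarrow> bool" where
  "radon_measure \<nu> \<longleftrightarrow> sets \<nu> = sets borel \<and> (\<forall>K. compact K \<longrightarrow> emeasure \<nu> K < \<infinity>)"

definition dyadically_doubling :: "(nat \<Rightarrow> real set set) \<Rightarrow> real measure \<Rightarrow> bool" where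
  "dyadically_doubling D \<nu> \<longleftrightarrow>
     (\<exists>C. \<forall>k\<ge>1. \<forall>I\<in>D k. \<forall>J\<in>D (k - 1). I \<subseteq> J \<longrightarrow> measure \<nu> J \<le> C * measure \<nu> I)"

definition T_map :: "real set \<Rightarrow> real \<Rightarrow> real" where
  "T_map I x = (x - Inf I) / (Sup I - Inf I)"

text \<open>Normalised blow-up \<mu>_I = T_I # (\<mu>|_I) / \<mu>(I) (zero measure if \<mu>(I) = 0).\<close>
definition blowup :: "real measure \<Rightarrow> real set \<Rightarrow> real measure" where
  "blowup \<mu> I = (if measure \<mu> I = 0 then null_measure borel
     else scale_measure (ennreal (1 / measure \<mu> I))
            (distr (density \<mu> (indicator I)) borel (T_map I)))"

definition W1 :: "real measure \<Rightarrow> real measure \<Rightarrow> real" where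
  "W1 m1 m2 = Sup {\<bar>(\<integral>x. \<psi> x \<partial>m1) - (\<integral>x. \<psi> x \<partial>m2)\<bar> | \<psi>.
      1-lipschitz_on UNIV \<psi> \<and> (\<forall>x. x \<notin> {0..1} \<longrightarrow> \<psi> x = 0)}"

definition alpha :: "real measure \<Rightarrow> real measure \<Rightarrow> real set \<Rightarrow> real" where
  "alpha \<mu> \<nu> I = W1 (blowup \<mu> I) (blowup \<nu> I)"

end

theory Submission
  imports Defs
begin


locale dyad =
  fixes D :: "nat \<Rightarrow> real set set"
  assumes gd: "gen_dyadic_system D"
begin

lemma gd1: "(\<forall>I\<in>D k. \<exists>a. I = {a..<a + (1/2)^k}) \<and> (\<forall>x::real. \<exists>!I. I \<in> D k \<and> x \<in> I)"
  using gd unfolding gen_dyadic_system_def by simp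

lemma gd2: "\<forall>I\<in>D k. \<exists>I1\<in>D (Suc k). \<exists>I2\<in>D (Suc k). I1 \<noteq> I2 \<and> I = I1 \<union> I2"
  using gd unfolding gen_dyadic_system_def by simp

lemma D_form: "J \<in> D k \<Longrightarrow> \<exists>a. J = {a..<a + (1/2)^k}"
  using gd1 by blast

lemma D_cover: "\<exists>J. J \<in> D k \<and> x \<in> J"
proof -
  have "\<exists>!I. I \<in> D k \<and> x \<in> I" using gd1 by blast
  then show ?thesis by (rule ex1_implies_ex)
qed

lemma D_eq: assumes "J1 \<in> D k" "J2 \<in> D k" "x \<in> J1" "x \<in> J2" shows "J1 = J2"
proof -
  have u: "\<exists>!I. I \<in> D k \<and> x \<in> I" using gd1 by blast
  show ?thesis using ex1E[OF u] assms by metis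
qed

lemma D_split: "J \<in> D k \<Longrightarrow> \<exists>I1\<in>D (Suc k). \<exists>I2\<in>D (Suc k). I1 \<noteq> I2 \<and> J = I1 \<union> I2"
  using gd2 by blast

lemma D_ne: "J \<in> D k \<Longrightarrow> J \<noteq> {}"
proof -
  assume "J \<in> D k"
  then obtain a where a: "J = {a..<a + (1/2)^k}" using D_form by blast
  have "(0::real) < (1/2)^k" by simp
  then have "a \<in> J" unfolding a by simp
  then show ?thesis by blast
qed

lemma D_disj: "J1 \<in> D k \<Longrightarrow> J2 \<in> D k \<Longrightarrow> J1 \<noteq> J2 \<Longrightarrow> J1 \<inter> J2 = {}"
  using D_eq by blast

lemma D_ex_mem: "J \<in> D k \<Longrightarrow> \<exists>x. x \<in> J"
  using D_ne by blast

lemma parent: "J \<in> D (Suc k) \<Longrightarrow> \<exists>P\<in>D k. J \<subseteq> P"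
proof -
  assume J: "J \<in> D (Suc k)"
  obtain x where x: "x \<in> J" using D_ex_mem[OF J] by blast
  obtain P where P: "P \<in> D k" "x \<in> P" using D_cover by blast
  obtain I1 I2 where I: "I1 \<in> D (Suc k)" "I2 \<in> D (Suc k)" "P = I1 \<union> I2" using D_split[OF P(1)] by blast
  have "x \<in> I1 \<or> x \<in> I2" using P(2) I(3) by blast
  then have "J = I1 \<or> J = I2" using D_eq[OF J I(1) x] D_eq[OF J I(2) x] by blast
  then have "J \<subseteq> P" using I(3) by blast
  then show ?thesis using P(1) by blast
qed

lemma anc: "J \<in> D (m + n) \<Longrightarrow> \<exists>P\<in>D m. J \<subseteq> P"
proof (induction n arbitrary: J)
  case 0 then show ?case by auto
next
  case (Suc n)
  obtain P where P: "P \<in> D (m+n)" "J \<subseteq> P" using parent[of J "m+n"] Suc.prems by auto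
  obtain Q where Q: "Q \<in> D m" "P \<subseteq> Q" using Suc.IH[OF P(1)] by blast
  have "J \<subseteq> Q" using P(2) Q(2) by (rule order_trans)
  then show ?case using Q(1) by blast
qed

definition desc :: "nat \<Rightarrow> nat \<Rightarrow> real set \<Rightarrow> real set set" where
  "desc m n J = {J' \<in> D (m + n). J' \<subseteq> J}"

lemma desc_0: assumes J: "J \<in> D m" shows "desc m 0 J = {J}"
proof -
  have "J' = J" if h: "J' \<in> D m" "J' \<subseteq> J" for J'
  proof -
    obtain x where x: "x \<in> J'" using D_ex_mem[OF h(1)] by blast
    show ?thesis using D_eq[OF h(1) J x] x h(2) by blast
  qed
  then show ?thesis unfolding desc_def using J by auto
qed

lemma desc_1: assumes "J \<in> D m" "I1 \<in> D (Suc m)" "I2 \<in> D (Suc m)" "J = I1 \<union> I2"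
  shows "desc m 1 J = {I1, I2}"
proof -
  have "J' \<in> {I1, I2}" if h: "J' \<in> D (Suc m)" "J' \<subseteq> J" for J'
  proof -
    obtain x where x: "x \<in> J'" using D_ex_mem[OF h(1)] by blast
    have "x \<in> I1 \<or> x \<in> I2" using x h(2) assms(4) by blast
    then show ?thesis using D_eq[OF h(1) assms(2) x] D_eq[OF h(1) assms(3) x] by blast
  qed
  moreover have "I1 \<subseteq> J" "I2 \<subseteq> J" using assms(4) by auto
  ultimately show ?thesis unfolding desc_def using assms(2,3) by auto
qed

lemma desc_sub: "J' \<in> desc m n J \<Longrightarrow> J' \<subseteq> J" unfolding desc_def by auto
lemma desc_D: "J' \<in> desc m n J \<Longrightarrow> J' \<in> D (m+n)" unfolding desc_def by auto

lemma desc_union: assumes J: "J \<in> D m"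
  shows "desc m (k+j) J = (\<Union>I\<in>desc m k J. desc (m+k) j I)"
proof
  show "desc m (k+j) J \<subseteq> (\<Union>I\<in>desc m k J. desc (m+k) j I)"
  proof
    fix J' assume J': "J' \<in> desc m (k+j) J"
    then have J'D: "J' \<in> D ((m+k)+j)" and sub: "J' \<subseteq> J" unfolding desc_def by (auto simp: add.assoc)
    obtain I where I: "I \<in> D (m+k)" "J' \<subseteq> I" using anc[OF J'D] by blast
    obtain P where P: "P \<in> D m" "I \<subseteq> P" using anc[OF I(1)] by blast
    obtain x where x: "x \<in> J'" using D_ex_mem[OF J'D] by blast
    have "P = J" using D_eq[OF P(1) J, of x] x sub I P by blast
    then have "I \<in> desc m k J" using I P unfolding desc_def by auto
    moreover have "J' \<in> desc (m+k) j I" using J'D I unfolding desc_def by auto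
    ultimately show "J' \<in> (\<Union>I\<in>desc m k J. desc (m+k) j I)" by blast
  qed
next
  show "(\<Union>I\<in>desc m k J. desc (m+k) j I) \<subseteq> desc m (k+j) J"
    unfolding desc_def by (auto simp: add.assoc)
qed

lemma desc_disj: assumes "I1 \<in> desc m k J" "I2 \<in> desc m k J" "I1 \<noteq> I2"
  shows "desc (m+k) j I1 \<inter> desc (m+k) j I2 = {}"
proof (rule ccontr)
  assume "desc (m+k) j I1 \<inter> desc (m+k) j I2 \<noteq> {}"
  then obtain J' where J': "J' \<in> desc (m+k) j I1" "J' \<in> desc (m+k) j I2" by blast
  obtain x where "x \<in> J'" using D_ex_mem[OF desc_D[OF J'(1)]] by blast
  then have "x \<in> I1" "x \<in> I2" using J' desc_sub by blast+
  then show False using D_eq[OF desc_D[OF assms(1)] desc_D[OF assms(2)]] assms(3) by blast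
qed

lemma desc_1_finite: assumes "J \<in> D m" shows "finite (desc m 1 J)"
proof -
  obtain I1 I2 where "I1 \<in> D (Suc m)" "I2 \<in> D (Suc m)" "J = I1 \<union> I2" using D_split[OF assms] by blast
  then show ?thesis using desc_1[OF assms] by simp
qed

lemma desc_finite: "J \<in> D m \<Longrightarrow> finite (desc m n J)"
proof (induction n)
  case 0 then show ?case by (simp add: desc_0)
next
  case (Suc n)
  have "desc m (n+1) J = (\<Union>I\<in>desc m n J. desc (m+n) 1 I)" by (rule desc_union[OF Suc.prems])
  moreover have "finite (desc (m+n) 1 I)" if "I \<in> desc m n J" for I
    using desc_1_finite[OF desc_D[OF that]] .
  ultimately show ?case using Suc by simp
qed

lemma sum_desc: assumes J: "J \<in> D m"
  shows "(\<Sum>J'\<in>desc m (k+j) J. h J') = (\<Sum>I\<in>desc m k J. \<Sum>J'\<in>desc (m+k) j I. h J')"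
  unfolding desc_union[OF J]
proof (rule sum.UNION_disjoint)
  show "finite (desc m k J)" by (rule desc_finite[OF J])
  show "\<forall>I\<in>desc m k J. finite (desc (m + k) j I)" using desc_finite[OF desc_D] by blast
  show "\<forall>I1\<in>desc m k J. \<forall>I2\<in>desc m k J. I1 \<noteq> I2 \<longrightarrow> desc (m + k) j I1 \<inter> desc (m + k) j I2 = {}"
    using desc_disj by blast
qed

lemma additive_desc:
  assumes add: "\<And>k J. J \<in> D k \<Longrightarrow> \<phi> J = (\<Sum>J'\<in>desc k 1 J. \<phi> J')" and J: "J \<in> D m"
  shows "\<phi> J = (\<Sum>J'\<in>desc m n J. \<phi> J')"
proof (induction n)
  case 0 then show ?case by (simp add: desc_0[OF J])
next
  case (Suc n)
  have "(\<Sum>J'\<in>desc m (n+1) J. \<phi> J') = (\<Sum>I\<in>desc m n J. \<Sum>J'\<in>desc (m+n) 1 I. \<phi> J')"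
    by (rule sum_desc[OF J])
  also have "\<dots> = (\<Sum>I\<in>desc m n J. \<phi> I)"
    by (rule sum.cong[OF refl]) (rule add[OF desc_D, symmetric])
  finally show ?case using Suc by simp
qed

end



lemma alg2:
  fixes n1 n2 m1 m2 :: real
  assumes n1: "n1 \<ge> 0" and n2: "n2 \<ge> 0" and z1: "n1 = 0 \<Longrightarrow> m1 = 0" and z2: "n2 = 0 \<Longrightarrow> m2 = 0"
  defines "n \<equiv> n1 + n2" and "m \<equiv> m1 + m2"
  shows "(n1 * \<bar>m1/n1 - m/n\<bar> + n2 * \<bar>m2/n2 - m/n\<bar>)^2 \<le> n * (m1^2/n1 + m2^2/n2 - m^2/n)"
    and "0 \<le> m1^2/n1 + m2^2/n2 - m^2/n"
proof -
  have "(n1 * \<bar>m1/n1 - m/n\<bar> + n2 * \<bar>m2/n2 - m/n\<bar>)^2 \<le> n * (m1^2/n1 + m2^2/n2 - m^2/n) \<and>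
        0 \<le> m1^2/n1 + m2^2/n2 - m^2/n"
  proof (cases "n1 = 0 \<or> n2 = 0")
    case True
    then show ?thesis
    proof
      assume "n1 = 0" then show ?thesis using z1 n2 by (auto simp: n_def m_def power2_eq_square)
    next
      assume "n2 = 0" then show ?thesis using z2 n1 by (auto simp: n_def m_def power2_eq_square)
    qed
  next
    case False
    then have p1: "n1 > 0" and p2: "n2 > 0" using n1 n2 by auto
    define X where "X = m1 * n2 - m2 * n1"
    have np: "n > 0" using p1 p2 by (simp add: n_def)
    have e1a: "n1 * (m1/n1 - m/n) = (m1*n - n1*m)/n" using p1 np by (simp add: field_simps)
    have e1b: "m1*n - n1*m = X" by (simp add: X_def n_def m_def algebra_simps)
    have e1: "n1 * (m1/n1 - m/n) = X / n" using e1a e1b by simp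
    have e2a: "n2 * (m2/n2 - m/n) = (m2*n - n2*m)/n" using p2 np by (simp add: field_simps)
    have e2b: "m2*n - n2*m = - X" by (simp add: X_def n_def m_def algebra_simps)
    have e2: "n2 * (m2/n2 - m/n) = - X / n" using e2a e2b by simp
    have h1: "n1 * \<bar>m1/n1 - m/n\<bar> = \<bar>X\<bar> / n" using e1 p1 np
      by (metis abs_divide abs_mult abs_of_pos)
    have h2: "n2 * \<bar>m2/n2 - m/n\<bar> = \<bar>X\<bar> / n" using e2 p2 np
      by (metis abs_divide abs_minus_cancel abs_mult abs_of_pos minus_divide_left)
    have d: "m1^2/n1 + m2^2/n2 - m^2/n = X^2 / (n1 * n2 * n)" using p1 p2 np
      by (simp add: X_def n_def m_def field_simps power2_eq_square)
    have q: "n^2 - 4*(n1*n2) = (n1-n2)^2" by (simp add: n_def power2_eq_square algebra_simps)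
    have q2: "4*(n1*n2) \<le> n^2" using q by (metis diff_ge_0_iff_ge zero_le_power2)
    have q3: "X^2 * (4*(n1*n2)) \<le> X^2 * n^2" using q2 by (rule mult_left_mono) simp
    have l: "(\<bar>X\<bar> / n + \<bar>X\<bar> / n)^2 = (X^2 * 4) / n^2"
      by (simp add: power2_eq_square field_simps)
    have r: "n * (X^2 / (n1 * n2 * n)) = X^2 / (n1*n2)" using np by simp
    have "(X^2 * 4) / n^2 \<le> X^2 / (n1*n2)"
      using q3 p1 p2 np by (simp add: divide_simps mult_ac)
    then have c1: "(n1 * \<bar>m1/n1 - m/n\<bar> + n2 * \<bar>m2/n2 - m/n\<bar>)^2 \<le> n * (m1^2/n1 + m2^2/n2 - m^2/n)"
      unfolding h1 h2 d l r .
    have c2: "0 \<le> m1^2/n1 + m2^2/n2 - m^2/n" unfolding d using p1 p2 np by simp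
    show ?thesis using c1 c2 by blast
  qed
  then show "(n1 * \<bar>m1/n1 - m/n\<bar> + n2 * \<bar>m2/n2 - m/n\<bar>)^2 \<le> n * (m1^2/n1 + m2^2/n2 - m^2/n)"
    and "0 \<le> m1^2/n1 + m2^2/n2 - m^2/n" by auto
qed

lemma weighted_cs:
  fixes w x :: "'a \<Rightarrow> real"
  assumes "finite A" "\<And>i. i \<in> A \<Longrightarrow> w i \<ge> 0"
  shows "(\<Sum>i\<in>A. w i * x i)^2 \<le> (\<Sum>i\<in>A. w i) * (\<Sum>i\<in>A. w i * (x i)^2)"
proof (cases "(\<Sum>i\<in>A. w i) = 0")
  case True
  then have "\<forall>i\<in>A. w i = 0" using sum_nonneg_eq_0_iff[of A w] assms by auto
  then show ?thesis by simp
next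
  case False
  define W where "W = (\<Sum>i\<in>A. w i)"
  define S where "S = (\<Sum>i\<in>A. w i * x i)"
  define P where "P = (\<Sum>i\<in>A. w i * (x i)^2)"
  have Wp: "W > 0" using False sum_nonneg[of A w] assms(2) unfolding W_def by fastforce
  define t where "t = S / W"
  have "0 \<le> (\<Sum>i\<in>A. w i * (x i - t)^2)" by (rule sum_nonneg) (simp add: assms(2))
  also have "\<dots> = (\<Sum>i\<in>A. w i * (x i)^2 - 2 * t * (w i * x i) + t^2 * w i)"
    by (rule sum.cong) (auto simp: power2_eq_square algebra_simps)
  also have "\<dots> = P - 2 * t * S + t^2 * W"
    by (simp add: sum.distrib sum_subtractf sum_distrib_left P_def S_def W_def)
  also have "\<dots> = P - S^2 / W" using Wp by (simp add: t_def field_simps power2_eq_square)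
  finally have "S^2 / W \<le> P" by simp
  then have "S^2 \<le> W * P" using Wp by (simp add: field_simps)
  then show ?thesis by (simp add: S_def W_def P_def)
qed




locale setting = dyad D for D :: "nat \<Rightarrow> real set set" +
  fixes \<nu> :: "real measure" and g :: "real \<Rightarrow> real"
  assumes radon: "radon_measure \<nu>"
    and gmeas: "g \<in> borel_measurable borel"
    and gnn: "\<And>x. g x \<ge> 0"
    and g2: "integrable \<nu> (\<lambda>x. (g x)^2)"
begin

lemma sets_nu[simp, measurable_cong]: "sets \<nu> = sets borel"
  using radon unfolding radon_measure_def by blast

lemma space_nu[simp]: "space \<nu> = UNIV"
  using sets_eq_imp_space_eq[OF sets_nu] by simp

lemma g_meas[measurable]: "g \<in> borel_measurable \<nu>"
  using gmeas measurable_cong_sets[OF sets_nu refl] by simp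

lemma D_sets: "J \<in> D k \<Longrightarrow> J \<in> sets \<nu>"
  using D_form[of J k] by auto

lemma D_fin: "J \<in> D k \<Longrightarrow> emeasure \<nu> J < \<infinity>"
proof -
  assume J: "J \<in> D k"
  then obtain a where a: "J = {a..<a + (1/2)^k}" using D_form by blast
  have "emeasure \<nu> J \<le> emeasure \<nu> {a..a + (1/2)^k}"
    by (rule emeasure_mono) (auto simp: a)
  also have "\<dots> < \<infinity>" using radon unfolding radon_measure_def by auto
  finally show ?thesis .
qed

lemma D_fin': "J \<in> D k \<Longrightarrow> emeasure \<nu> J \<noteq> \<infinity>"
proof -
  assume "J \<in> D k"
  then have "emeasure \<nu> J < \<infinity>" by (rule D_fin)
  then show ?thesis by simp
qed

lemma int_ind: "J \<in> D k \<Longrightarrow> integrable \<nu> (indicator J :: real \<Rightarrow> real)"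
  using D_sets D_fin by (rule integrable_real_indicator)

lemma g_le: "g x \<le> 1 + (g x)^2"
proof (cases "g x \<le> 1")
  case True
  then show ?thesis by (smt (verit) zero_le_power2)
next
  case False
  then have "g x * 1 \<le> g x * g x" by (intro mult_left_mono) auto
  then show ?thesis by (simp add: power2_eq_square)
qed

lemma int_g: assumes J: "J \<in> D k" shows "integrable \<nu> (\<lambda>x. indicator J x * g x)"
proof -
  have i: "integrable \<nu> (\<lambda>x. indicator J x + (g x)^2)" using int_ind[OF J] g2 by (rule Bochner_Integration.integrable_add)
  have JS: "J \<in> sets borel" using D_sets[OF J] by simp
  have m: "(\<lambda>x. indicator J x * g x) \<in> borel_measurable \<nu>"
    using borel_measurable_indicator[OF D_sets[OF J]] g_meas by (rule borel_measurable_times)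
  have b: "norm (indicator J x * g x) \<le> norm (indicator J x + (g x)^2)" for x
  proof (cases "x \<in> J")
    case True
    then show ?thesis using g_le[of x] gnn[of x] by simp
  next
    case False
    then show ?thesis by simp
  qed
  show ?thesis by (rule Bochner_Integration.integrable_bound[OF i m]) (rule AE_I2, rule b)
qed

lemma int_g2: assumes J: "J \<in> D k" shows "integrable \<nu> (\<lambda>x. indicator J x * (g x)^2)"
proof -
  have "integrable \<nu> (\<lambda>x. indicator J x *\<^sub>R (g x)^2)" using D_sets[OF J] g2 by (rule integrable_mult_indicator)
  then show ?thesis by simp
qed

definition nu :: "real set \<Rightarrow> real" where "nu J = measure \<nu> J"
definition mm :: "real set \<Rightarrow> real" where "mm J = integral\<^sup>L \<nu> (\<lambda>x. indicator J x * g x)"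
definition q2 :: "real set \<Rightarrow> real" where "q2 J = integral\<^sup>L \<nu> (\<lambda>x. indicator J x * (g x)^2)"
definition aa :: "real set \<Rightarrow> real" where "aa J = mm J / nu J"
definition QQ :: "real set \<Rightarrow> real" where "QQ J = (mm J)^2 / nu J"
definition dd :: "nat \<Rightarrow> real set \<Rightarrow> real" where "dd k J = (\<Sum>J'\<in>desc k 1 J. QQ J') - QQ J"
definition ee :: "nat \<Rightarrow> real set \<Rightarrow> real" where "ee k J = (\<Sum>J'\<in>desc k 1 J. nu J' * \<bar>aa J' - aa J\<bar>)"

lemma nu_nn: "nu J \<ge> 0" unfolding nu_def by simp
lemma mm_nn: "mm J \<ge> 0" unfolding mm_def using gnn by (intro integral_nonneg_AE) (auto split: split_indicator)
lemma q2_nn: "q2 J \<ge> 0" unfolding q2_def by (intro integral_nonneg_AE) (auto split: split_indicator)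
lemma aa_nn: "aa J \<ge> 0" unfolding aa_def using nu_nn mm_nn by simp
lemma QQ_nn: "QQ J \<ge> 0" unfolding QQ_def using nu_nn by simp

lemma mm_zero: assumes J: "J \<in> D k" and z: "nu J = 0" shows "mm J = 0"
proof -
  have "emeasure \<nu> J = 0" using z D_fin'[OF J] unfolding nu_def
    by (simp add: emeasure_eq_ennreal_measure)
  then have "J \<in> null_sets \<nu>" using D_sets[OF J] by auto
  then have "AE x in \<nu>. x \<notin> J" by (rule AE_not_in)
  then have "AE x in \<nu>. indicator J x * g x = 0" by eventually_elim auto
  then show ?thesis unfolding mm_def by (rule integral_eq_zero_AE)
qed

lemma aa_nu: "J \<in> D k \<Longrightarrow> aa J * nu J = mm J"
  unfolding aa_def using mm_zero by (cases "nu J = 0") auto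

lemma split2:
  assumes J: "J \<in> D m"
  obtains I1 I2 where "I1 \<in> D (Suc m)" "I2 \<in> D (Suc m)" "I1 \<noteq> I2" "J = I1 \<union> I2"
    "I1 \<inter> I2 = {}" "desc m 1 J = {I1, I2}"
proof -
  obtain I1 I2 where I: "I1 \<in> D (Suc m)" "I2 \<in> D (Suc m)" "I1 \<noteq> I2" "J = I1 \<union> I2"
    using D_split[OF J] by blast
  show ?thesis using that[OF I D_disj[OF I(1,2,3)] desc_1[OF J I(1,2,4)]] .
qed

lemma nu_add: assumes J: "J \<in> D m" shows "nu J = (\<Sum>J'\<in>desc m 1 J. nu J')"
proof -
  obtain I1 I2 where I: "I1 \<in> D (Suc m)" "I2 \<in> D (Suc m)" "I1 \<noteq> I2" "J = I1 \<union> I2"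
    "I1 \<inter> I2 = {}" "desc m 1 J = {I1, I2}" using split2[OF J] by blast
  show ?thesis unfolding I(6) nu_def
    using I(4) measure_Union[OF D_fin'[OF I(1)] D_fin'[OF I(2)] D_sets[OF I(1)] D_sets[OF I(2)] I(5)] I(3)
    by simp
qed

lemma ind_add: "I1 \<inter> I2 = {} \<Longrightarrow> (indicator (I1 \<union> I2) x :: real) = indicator I1 x + indicator I2 x"
  by (rule indicator_disj_union)

lemma mm_add: assumes J: "J \<in> D m" shows "mm J = (\<Sum>J'\<in>desc m 1 J. mm J')"
proof -
  obtain I1 I2 where I: "I1 \<in> D (Suc m)" "I2 \<in> D (Suc m)" "I1 \<noteq> I2" "J = I1 \<union> I2"
    "I1 \<inter> I2 = {}" "desc m 1 J = {I1, I2}" using split2[OF J] by blast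
  have "mm J = integral\<^sup>L \<nu> (\<lambda>x. indicator I1 x * g x + indicator I2 x * g x)"
    unfolding mm_def I(4) ind_add[OF I(5)] by (simp add: algebra_simps)
  also have "\<dots> = mm I1 + mm I2" unfolding mm_def using int_g[OF I(1)] int_g[OF I(2)] by simp
  finally show ?thesis using I by simp
qed

lemma q2_add: assumes J: "J \<in> D m" shows "q2 J = (\<Sum>J'\<in>desc m 1 J. q2 J')"
proof -
  obtain I1 I2 where I: "I1 \<in> D (Suc m)" "I2 \<in> D (Suc m)" "I1 \<noteq> I2" "J = I1 \<union> I2"
    "I1 \<inter> I2 = {}" "desc m 1 J = {I1, I2}" using split2[OF J] by blast
  have "q2 J = integral\<^sup>L \<nu> (\<lambda>x. indicator I1 x * (g x)^2 + indicator I2 x * (g x)^2)"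
    unfolding q2_def I(4) ind_add[OF I(5)] by (simp add: algebra_simps)
  also have "\<dots> = q2 I1 + q2 I2" unfolding q2_def using int_g2[OF I(1)] int_g2[OF I(2)] by simp
  finally show ?thesis using I by simp
qed

lemma QQ_le: assumes J: "J \<in> D k" shows "QQ J \<le> q2 J"
proof (cases "nu J = 0")
  case True then show ?thesis using q2_nn by (simp add: QQ_def)
next
  case False
  then have np: "nu J > 0" using nu_nn[of J] by simp
  define a where "a = aa J"
  have ii: "integrable \<nu> (\<lambda>x. indicator J x * (g x)^2 - 2 * a * (indicator J x * g x) + a^2 * indicator J x)"
    using int_g[OF J] int_g2[OF J] int_ind[OF J] by auto
  have "0 \<le> integral\<^sup>L \<nu> (\<lambda>x. indicator J x * (g x - a)^2)"
    by (intro integral_nonneg_AE) (auto split: split_indicator)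
  also have "\<dots> = integral\<^sup>L \<nu> (\<lambda>x. indicator J x * (g x)^2 - 2 * a * (indicator J x * g x) + a^2 * indicator J x)"
    by (rule Bochner_Integration.integral_cong) (auto split: split_indicator simp: power2_eq_square algebra_simps)
  also have "\<dots> = q2 J - 2 * a * mm J + a^2 * nu J"
    using int_g[OF J] int_g2[OF J] int_ind[OF J] D_sets[OF J] D_fin'[OF J]
    by (simp add: q2_def mm_def nu_def)
  also have "\<dots> = q2 J - QQ J" using np by (simp add: a_def aa_def QQ_def field_simps power2_eq_square)
  finally show ?thesis by simp
qed

lemma ee_dd: assumes J: "J \<in> D m"
  shows "(ee m J)^2 \<le> nu J * dd m J" and "0 \<le> dd m J" and "0 \<le> ee m J"
proof -
  obtain I1 I2 where I: "I1 \<in> D (Suc m)" "I2 \<in> D (Suc m)" "I1 \<noteq> I2" "J = I1 \<union> I2"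
    "I1 \<inter> I2 = {}" "desc m 1 J = {I1, I2}" using split2[OF J] by blast
  have n: "nu J = nu I1 + nu I2" using nu_add[OF J] I by simp
  have mmJ: "mm J = mm I1 + mm I2" using mm_add[OF J] I by simp
  note A = alg2[OF nu_nn[of I1] nu_nn[of I2] mm_zero[OF I(1)] mm_zero[OF I(2)]]
  have e: "ee m J = nu I1 * \<bar>mm I1/nu I1 - mm J/nu J\<bar> + nu I2 * \<bar>mm I2/nu I2 - mm J/nu J\<bar>"
    unfolding ee_def I(6) using I(3) by (simp add: aa_def)
  have d: "dd m J = (mm I1)^2/nu I1 + (mm I2)^2/nu I2 - (mm J)^2/nu J"
    unfolding dd_def I(6) using I(3) by (simp add: QQ_def)
  show "(ee m J)^2 \<le> nu J * dd m J" using A(1) unfolding e d n mmJ .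
  show "0 \<le> dd m J" using A(2) unfolding d n mmJ .
  show "0 \<le> ee m J" unfolding ee_def by (rule sum_nonneg) (simp add: nu_nn)
qed

end



context setting
begin

definition EE :: "nat \<Rightarrow> nat \<Rightarrow> real set \<Rightarrow> real" where
  "EE m j J = (\<Sum>J'\<in>desc m j J. ee (m+j) J')"

definition FF :: "(real \<Rightarrow> real) \<Rightarrow> real set \<Rightarrow> real" where
  "FF f J = integral\<^sup>L \<nu> (\<lambda>x. indicator J x * (f x * g x)) - aa J * integral\<^sup>L \<nu> (\<lambda>x. indicator J x * f x)"

lemma EE_0: "J \<in> D m \<Longrightarrow> EE m 0 J = ee m J"
  unfolding EE_def by (simp add: desc_0)

lemma EE_Suc: assumes J: "J \<in> D m"
  shows "EE m (Suc j) J = (\<Sum>I\<in>desc m 1 J. EE (Suc m) j I)"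
proof -
  have "EE m (Suc j) J = (\<Sum>J'\<in>desc m (1+j) J. ee (m+(1+j)) J')" unfolding EE_def by simp
  also have "\<dots> = (\<Sum>I\<in>desc m 1 J. \<Sum>J'\<in>desc (m+1) j I. ee (m+(1+j)) J')"
    by (rule sum_desc[OF J])
  also have "\<dots> = (\<Sum>I\<in>desc m 1 J. EE (Suc m) j I)" unfolding EE_def by simp
  finally show ?thesis .
qed

lemma EE_nn: "J \<in> D m \<Longrightarrow> EE m j J \<ge> 0"
  unfolding EE_def by (rule sum_nonneg) (auto intro: ee_dd(3)[OF desc_D])

lemma D_osc: assumes J: "J \<in> D m" "x \<in> J" "y \<in> J" shows "\<bar>x - y\<bar> \<le> (1/2)^m"
proof -
  obtain a where a: "J = {a..<a + (1/2)^m}" using D_form[OF J(1)] by blast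
  show ?thesis using J(2,3) unfolding a by auto
qed

end

locale lipf = setting D \<nu> g for D \<nu> g +
  fixes f :: "real \<Rightarrow> real" and L B :: real
  assumes lip: "\<And>x y. \<bar>f x - f y\<bar> \<le> L * \<bar>x - y\<bar>"
    and fmeas: "f \<in> borel_measurable borel"
    and fbd: "\<And>x. \<bar>f x\<bar> \<le> B"
begin

lemma L_nn: "L \<ge> 0"
proof -
  have "\<bar>f 1 - f 0\<bar> \<le> L * \<bar>1 - 0\<bar>" by (rule lip)
  then have "\<bar>f 1 - f 0\<bar> \<le> L" by simp
  moreover have "0 \<le> \<bar>f 1 - f 0\<bar>" by simp
  ultimately show ?thesis by linarith
qed

lemma f_meas[measurable]: "f \<in> borel_measurable \<nu>"
  using fmeas measurable_cong_sets[OF sets_nu refl] by simp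

lemma f_osc: assumes J: "J \<in> D m" "x \<in> J" "y \<in> J" shows "\<bar>f x - f y\<bar> \<le> L * (1/2)^m"
proof -
  have "L * \<bar>x - y\<bar> \<le> L * (1/2)^m" by (rule mult_left_mono[OF D_osc[OF J] L_nn])
  then show ?thesis using lip[of x y] by linarith
qed

lemma int_f: assumes J: "J \<in> D k" shows "integrable \<nu> (\<lambda>x. indicator J x * f x)"
proof -
  have i: "integrable \<nu> (\<lambda>x. B * indicator J x)" using int_ind[OF J] by simp
  have m: "(\<lambda>x. indicator J x * f x) \<in> borel_measurable \<nu>"
    using borel_measurable_indicator[OF D_sets[OF J]] f_meas by (rule borel_measurable_times)
  have b: "norm (indicator J x * f x) \<le> norm (B * indicator J x)" for x
    using fbd[of x] by (cases "x \<in> J") auto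
  show ?thesis by (rule Bochner_Integration.integrable_bound[OF i m]) (rule AE_I2, rule b)
qed

lemma int_fg: assumes J: "J \<in> D k" shows "integrable \<nu> (\<lambda>x. indicator J x * (f x * g x))"
proof -
  have i: "integrable \<nu> (\<lambda>x. B * (indicator J x * g x))" using int_g[OF J] by simp
  have m: "(\<lambda>x. indicator J x * (f x * g x)) \<in> borel_measurable \<nu>"
    using borel_measurable_indicator[OF D_sets[OF J]] borel_measurable_times[OF f_meas g_meas]
    by (rule borel_measurable_times)
  have b: "norm (indicator J x * (f x * g x)) \<le> norm (B * (indicator J x * g x))" for x
  proof (cases "x \<in> J")
    case True
    have "\<bar>f x * g x\<bar> \<le> B * g x" using fbd[of x] gnn[of x] by (simp add: abs_mult mult_right_mono)
    moreover have "B \<ge> 0" using fbd[of x] by simp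
    ultimately show ?thesis using True gnn[of x] by (simp add: abs_mult)
  qed simp
  show ?thesis by (rule Bochner_Integration.integrable_bound[OF i m]) (rule AE_I2, rule b)
qed

lemma int_ind_nu: "J \<in> D k \<Longrightarrow> integral\<^sup>L \<nu> (indicator J :: real \<Rightarrow> real) = nu J"
  unfolding nu_def using D_sets D_fin' by simp

lemma osc_int: assumes J: "J \<in> D m" and I: "I \<in> D k" "I \<subseteq> J" and c: "c \<in> J"
  shows "\<bar>integral\<^sup>L \<nu> (\<lambda>x. indicator I x * (f x - f c))\<bar> \<le> L * (1/2)^m * nu I"
proof -
  have "\<bar>integral\<^sup>L \<nu> (\<lambda>x. indicator I x * (f x - f c))\<bar> \<le> integral\<^sup>L \<nu> (\<lambda>x. L * (1/2)^m * indicator I x)"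
  proof (rule integral_abs_bound_integral)
    show "integrable \<nu> (\<lambda>x. indicator I x * (f x - f c))"
      using int_f[OF I(1)] int_ind[OF I(1)] by (simp add: right_diff_distrib)
    show "integrable \<nu> (\<lambda>x. L * (1/2)^m * indicator I x)" using int_ind[OF I(1)] by simp
    fix x
    show "\<bar>indicator I x * (f x - f c)\<bar> \<le> L * (1/2)^m * indicator I x"
    proof (cases "x \<in> I")
      case True then show ?thesis using f_osc[OF J _ c, of x] I(2) by auto
    qed simp
  qed
  also have "\<dots> = L * (1/2)^m * nu I" using int_ind_nu[OF I(1)] int_ind[OF I(1)] by simp
  finally show ?thesis .
qed

lemma FF_base: assumes J: "J \<in> D m"
  shows "\<bar>FF f J\<bar> \<le> L * (1/2)^m * (2 * mm J)"
proof -
  obtain c where c: "c \<in> J" using D_ex_mem[OF J] by blast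
  define a where "a = aa J"
  have a_nn: "a \<ge> 0" using aa_nn by (simp add: a_def)
  have ii: "integrable \<nu> (\<lambda>x. indicator J x * (f x * g x) - a * (indicator J x * f x)
      - f c * (indicator J x * g x) + (f c * a) * indicator J x)"
    using int_f[OF J] int_fg[OF J] int_g[OF J] int_ind[OF J] by auto
  have "integral\<^sup>L \<nu> (\<lambda>x. indicator J x * (f x - f c) * (g x - a))
      = integral\<^sup>L \<nu> (\<lambda>x. indicator J x * (f x * g x) - a * (indicator J x * f x)
      - f c * (indicator J x * g x) + (f c * a) * indicator J x)"
    by (rule Bochner_Integration.integral_cong) (auto simp: algebra_simps)
  also have "\<dots> = integral\<^sup>L \<nu> (\<lambda>x. indicator J x * (f x * g x)) - a * integral\<^sup>L \<nu> (\<lambda>x. indicator J x * f x)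
      - f c * integral\<^sup>L \<nu> (\<lambda>x. indicator J x * g x) + (f c * a) * integral\<^sup>L \<nu> (indicator J)"
  proof -
    have i1: "integrable \<nu> (\<lambda>x. indicator J x * (f x * g x) - a * (indicator J x * f x))"
      using int_f[OF J] int_fg[OF J] by auto
    have i2: "integrable \<nu> (\<lambda>x. indicator J x * (f x * g x) - a * (indicator J x * f x) - f c * (indicator J x * g x))"
      using i1 int_g[OF J] by auto
    have "integral\<^sup>L \<nu> (\<lambda>x. indicator J x * (f x * g x) - a * (indicator J x * f x)
      - f c * (indicator J x * g x) + (f c * a) * indicator J x) =
      integral\<^sup>L \<nu> (\<lambda>x. indicator J x * (f x * g x) - a * (indicator J x * f x)
      - f c * (indicator J x * g x)) + integral\<^sup>L \<nu> (\<lambda>x. (f c * a) * indicator J x)"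
      using i2 int_ind[OF J] by (intro Bochner_Integration.integral_add) auto
    also have "integral\<^sup>L \<nu> (\<lambda>x. indicator J x * (f x * g x) - a * (indicator J x * f x)
      - f c * (indicator J x * g x)) = integral\<^sup>L \<nu> (\<lambda>x. indicator J x * (f x * g x) - a * (indicator J x * f x))
      - integral\<^sup>L \<nu> (\<lambda>x. f c * (indicator J x * g x))"
      using i1 int_g[OF J] by (intro Bochner_Integration.integral_diff) auto
    also have "integral\<^sup>L \<nu> (\<lambda>x. indicator J x * (f x * g x) - a * (indicator J x * f x))
      = integral\<^sup>L \<nu> (\<lambda>x. indicator J x * (f x * g x)) - integral\<^sup>L \<nu> (\<lambda>x. a * (indicator J x * f x))"
      using int_fg[OF J] int_f[OF J] by (intro Bochner_Integration.integral_diff) auto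
    finally show ?thesis by simp
  qed
  also have "\<dots> = FF f J - f c * (mm J - a * nu J)"
    using int_ind_nu[OF J] by (simp add: FF_def mm_def a_def algebra_simps)
  also have "\<dots> = FF f J" using aa_nu[OF J] by (simp add: a_def)
  finally have eq: "FF f J = integral\<^sup>L \<nu> (\<lambda>x. indicator J x * (f x - f c) * (g x - a))" by simp
  have "\<bar>integral\<^sup>L \<nu> (\<lambda>x. indicator J x * (f x - f c) * (g x - a))\<bar>
      \<le> integral\<^sup>L \<nu> (\<lambda>x. L * (1/2)^m * (indicator J x * g x) + L * (1/2)^m * a * indicator J x)"
  proof (rule integral_abs_bound_integral)
    have eqf: "(\<lambda>x. indicator J x * (f x - f c) * (g x - a)) = (\<lambda>x. indicator J x * (f x * g x) - a * (indicator J x * f x)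
      - f c * (indicator J x * g x) + (f c * a) * indicator J x)"
      by (rule ext) (simp add: algebra_simps)
    show "integrable \<nu> (\<lambda>x. indicator J x * (f x - f c) * (g x - a))"
      unfolding eqf by (rule ii)
    show "integrable \<nu> (\<lambda>x. L * (1/2)^m * (indicator J x * g x) + L * (1/2)^m * a * indicator J x)"
      using int_g[OF J] int_ind[OF J] by simp
    fix x
    show "\<bar>indicator J x * (f x - f c) * (g x - a)\<bar> \<le> L * (1/2)^m * (indicator J x * g x) + L * (1/2)^m * a * indicator J x"
    proof (cases "x \<in> J")
      case True
      have o: "\<bar>f x - f c\<bar> \<le> L * (1/2)^m" using f_osc[OF J True c] .
      have "\<bar>g x - a\<bar> \<le> g x + a" using gnn[of x] a_nn by linarith
      then have "\<bar>f x - f c\<bar> * \<bar>g x - a\<bar> \<le> L * (1/2)^m * (g x + a)"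
        using o by (intro mult_mono) (auto simp: L_nn)
      moreover have "\<bar>indicator J x * (f x - f c) * (g x - a)\<bar> = \<bar>f x - f c\<bar> * \<bar>g x - a\<bar>"
        using True by (simp add: abs_mult)
      moreover have "L * (1/2)^m * (indicator J x * g x) + L * (1/2)^m * a * indicator J x = L * (1/2)^m * (g x + a)"
        using True by (simp add: algebra_simps)
      ultimately show ?thesis by simp
    qed simp
  qed
  also have "\<dots> = integral\<^sup>L \<nu> (\<lambda>x. L * (1/2)^m * (indicator J x * g x)) + integral\<^sup>L \<nu> (\<lambda>x. L * (1/2)^m * a * indicator J x)"
    using int_g[OF J] int_ind[OF J] by (intro Bochner_Integration.integral_add) auto
  also have "\<dots> = L * (1/2)^m * mm J + L * (1/2)^m * a * nu J"
    using int_ind_nu[OF J] unfolding mm_def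
    by (simp only: Bochner_Integration.integral_mult_right_zero)
  also have "\<dots> = L * (1/2)^m * (mm J + a * nu J)" by (simp add: algebra_simps)
  also have "\<dots> = L * (1/2)^m * (2 * mm J)" using aa_nu[OF J] by (simp add: a_def)
  finally show ?thesis using eq by simp
qed

lemma FF_step: assumes J: "J \<in> D m"
  shows "\<bar>FF f J\<bar> \<le> (\<Sum>I\<in>desc m 1 J. \<bar>FF f I\<bar>) + L * (1/2)^m * ee m J"
proof -
  obtain I1 I2 where I: "I1 \<in> D (Suc m)" "I2 \<in> D (Suc m)" "I1 \<noteq> I2" "J = I1 \<union> I2"
    "I1 \<inter> I2 = {}" "desc m 1 J = {I1, I2}" using split2[OF J] by blast
  obtain c where c: "c \<in> J" using D_ex_mem[OF J] by blast
  define a where "a = aa J"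
  define a1 where "a1 = aa I1"
  define a2 where "a2 = aa I2"
  define S1 where "S1 = integral\<^sup>L \<nu> (\<lambda>x. indicator I1 x * f x)"
  define S2 where "S2 = integral\<^sup>L \<nu> (\<lambda>x. indicator I2 x * f x)"
  have fg: "integral\<^sup>L \<nu> (\<lambda>x. indicator J x * (f x * g x)) =
     integral\<^sup>L \<nu> (\<lambda>x. indicator I1 x * (f x * g x)) + integral\<^sup>L \<nu> (\<lambda>x. indicator I2 x * (f x * g x))"
  proof -
    have "integral\<^sup>L \<nu> (\<lambda>x. indicator J x * (f x * g x)) =
      integral\<^sup>L \<nu> (\<lambda>x. indicator I1 x * (f x * g x) + indicator I2 x * (f x * g x))"
      unfolding I(4) ind_add[OF I(5)] by (simp add: algebra_simps)
    then show ?thesis using int_fg[OF I(1)] int_fg[OF I(2)] by simp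
  qed
  have ff: "integral\<^sup>L \<nu> (\<lambda>x. indicator J x * f x) = S1 + S2"
  proof -
    have "integral\<^sup>L \<nu> (\<lambda>x. indicator J x * f x) =
      integral\<^sup>L \<nu> (\<lambda>x. indicator I1 x * f x + indicator I2 x * f x)"
      unfolding I(4) ind_add[OF I(5)] by (simp add: algebra_simps)
    then show ?thesis using int_f[OF I(1)] int_f[OF I(2)] by (simp add: S1_def S2_def)
  qed
  have dec: "FF f J = FF f I1 + FF f I2 + ((a1 - a) * S1 + (a2 - a) * S2)"
    unfolding FF_def fg ff by (simp add: a_def a1_def a2_def S1_def S2_def algebra_simps)
  have n: "nu J = nu I1 + nu I2" using nu_add[OF J] I by simp
  have mmJ: "mm J = mm I1 + mm I2" using mm_add[OF J] I by simp
  have z: "(a1 - a) * nu I1 + (a2 - a) * nu I2 = 0"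
    using aa_nu[OF J] aa_nu[OF I(1)] aa_nu[OF I(2)] n mmJ
    by (simp add: a_def a1_def a2_def algebra_simps)
  have S1': "S1 = integral\<^sup>L \<nu> (\<lambda>x. indicator I1 x * (f x - f c)) + f c * nu I1"
    using int_f[OF I(1)] int_ind[OF I(1)] int_ind_nu[OF I(1)] by (simp add: S1_def right_diff_distrib)
  have S2': "S2 = integral\<^sup>L \<nu> (\<lambda>x. indicator I2 x * (f x - f c)) + f c * nu I2"
    using int_f[OF I(2)] int_ind[OF I(2)] int_ind_nu[OF I(2)] by (simp add: S2_def right_diff_distrib)
  have T: "(a1 - a) * S1 + (a2 - a) * S2 = (a1 - a) * integral\<^sup>L \<nu> (\<lambda>x. indicator I1 x * (f x - f c))
     + (a2 - a) * integral\<^sup>L \<nu> (\<lambda>x. indicator I2 x * (f x - f c))"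
  proof -
    have "(a1 - a) * S1 + (a2 - a) * S2 = (a1 - a) * integral\<^sup>L \<nu> (\<lambda>x. indicator I1 x * (f x - f c))
     + (a2 - a) * integral\<^sup>L \<nu> (\<lambda>x. indicator I2 x * (f x - f c)) + f c * ((a1 - a) * nu I1 + (a2 - a) * nu I2)"
      unfolding S1' S2' by (simp add: algebra_simps)
    then show ?thesis using z by simp
  qed
  have sub1: "I1 \<subseteq> J" "I2 \<subseteq> J" using I(4) by auto
  have b1: "\<bar>(a1 - a) * integral\<^sup>L \<nu> (\<lambda>x. indicator I1 x * (f x - f c))\<bar> \<le> \<bar>a1 - a\<bar> * (L * (1/2)^m * nu I1)"
    unfolding abs_mult by (rule mult_left_mono[OF osc_int[OF J I(1) sub1(1) c]]) simp
  have b2: "\<bar>(a2 - a) * integral\<^sup>L \<nu> (\<lambda>x. indicator I2 x * (f x - f c))\<bar> \<le> \<bar>a2 - a\<bar> * (L * (1/2)^m * nu I2)"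
    unfolding abs_mult by (rule mult_left_mono[OF osc_int[OF J I(2) sub1(2) c]]) simp
  have e: "ee m J = nu I1 * \<bar>a1 - a\<bar> + nu I2 * \<bar>a2 - a\<bar>"
    unfolding ee_def I(6) using I(3) by (simp add: a_def a1_def a2_def)
  have "\<bar>FF f J\<bar> \<le> \<bar>FF f I1\<bar> + \<bar>FF f I2\<bar> + (\<bar>a1 - a\<bar> * (L * (1/2)^m * nu I1) + \<bar>a2 - a\<bar> * (L * (1/2)^m * nu I2))"
    unfolding dec T using b1 b2 by linarith
  also have "\<dots> = (\<Sum>I\<in>desc m 1 J. \<bar>FF f I\<bar>) + L * (1/2)^m * ee m J"
    unfolding e I(6) using I(3) by (simp add: algebra_simps)
  finally show ?thesis .
qed

lemma FF_bound: assumes J: "J \<in> D m"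
  shows "\<bar>FF f J\<bar> \<le> (\<Sum>j<N. L * (1/2)^(m+j) * EE m j J) + L * (1/2)^(m+N) * (2 * mm J)"
  using J
proof (induction N arbitrary: m J)
  case 0
  then show ?case using FF_base[OF 0] by simp
next
  case (Suc N)
  note J = Suc.prems
  have IH: "\<bar>FF f I\<bar> \<le> (\<Sum>j<N. L * (1/2)^(Suc m+j) * EE (Suc m) j I) + L * (1/2)^(Suc m+N) * (2 * mm I)"
    if "I \<in> desc m 1 J" for I
    using Suc.IH[OF desc_D[OF that, simplified]] .
  have "\<bar>FF f J\<bar> \<le> (\<Sum>I\<in>desc m 1 J. \<bar>FF f I\<bar>) + L * (1/2)^m * ee m J" by (rule FF_step[OF J])
  also have "\<dots> \<le> (\<Sum>I\<in>desc m 1 J. (\<Sum>j<N. L * (1/2)^(Suc m+j) * EE (Suc m) j I) + L * (1/2)^(Suc m+N) * (2 * mm I))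
      + L * (1/2)^m * ee m J"
    using IH by (intro add_right_mono sum_mono) auto
  also have "\<dots> = (\<Sum>j<N. L * (1/2)^(Suc m+j) * (\<Sum>I\<in>desc m 1 J. EE (Suc m) j I))
      + L * (1/2)^(Suc m+N) * (2 * (\<Sum>I\<in>desc m 1 J. mm I)) + L * (1/2)^m * ee m J"
  proof -
    let ?C = "desc m 1 J"
    have a: "(\<Sum>I\<in>?C. (\<Sum>j<N. L * (1/2)^(Suc m+j) * EE (Suc m) j I) + L * (1/2)^(Suc m+N) * (2 * mm I))
      = (\<Sum>I\<in>?C. \<Sum>j<N. L * (1/2)^(Suc m+j) * EE (Suc m) j I) + (\<Sum>I\<in>?C. L * (1/2)^(Suc m+N) * (2 * mm I))"
      by (rule sum.distrib)
    have b: "(\<Sum>I\<in>?C. \<Sum>j<N. L * (1/2)^(Suc m+j) * EE (Suc m) j I) = (\<Sum>j<N. \<Sum>I\<in>?C. L * (1/2)^(Suc m+j) * EE (Suc m) j I)"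
      by (rule sum.swap)
    have c: "(\<Sum>j<N. \<Sum>I\<in>?C. L * (1/2)^(Suc m+j) * EE (Suc m) j I) = (\<Sum>j<N. L * (1/2)^(Suc m+j) * (\<Sum>I\<in>?C. EE (Suc m) j I))"
      by (simp only: sum_distrib_left)
    have d: "(\<Sum>I\<in>?C. L * (1/2)^(Suc m+N) * (2 * mm I)) = L * (1/2)^(Suc m+N) * (2 * (\<Sum>I\<in>?C. mm I))"
      by (simp only: sum_distrib_left)
    show ?thesis unfolding a b c d ..
  qed
  also have "\<dots> = (\<Sum>j<N. L * (1/2)^(m + Suc j) * EE m (Suc j) J)
      + L * (1/2)^(m + Suc N) * (2 * mm J) + L * (1/2)^m * EE m 0 J"
    using EE_Suc[OF J] mm_add[OF J] EE_0[OF J] by simp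
  also have "\<dots> = (\<Sum>j<Suc N. L * (1/2)^(m+j) * EE m j J) + L * (1/2)^(m + Suc N) * (2 * mm J)"
  proof -
    have s: "(\<Sum>j<Suc N. L * (1/2)^(m+j) * EE m j J) = L * (1/2)^(m+0) * EE m 0 J + (\<Sum>j<N. L * (1/2)^(m + Suc j) * EE m (Suc j) J)"
      by (rule sum.lessThan_Suc_shift)
    have s0: "L * (1/2)^(m+0) * EE m 0 J = L * (1/2)^m * EE m 0 J" by (simp only: add_0_right)
    show ?thesis using s s0 by linarith
  qed
  finally show ?case .
qed

end



lemma scale_as_density:
  assumes c: "c \<ge> 0"
  shows "scale_measure (ennreal c) M = density M (\<lambda>_. ennreal c)"
proof (rule measure_eqI)
  show "sets (scale_measure (ennreal c) M) = sets (density M (\<lambda>_. ennreal c))" by simp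
  fix A assume "A \<in> sets (scale_measure (ennreal c) M)"
  then have A: "A \<in> sets M" by simp
  have "emeasure (density M (\<lambda>_. ennreal c)) A = (\<integral>\<^sup>+ x. ennreal c * indicator A x \<partial>M)"
    using A by (simp add: emeasure_density)
  also have "\<dots> = ennreal c * emeasure M A" using A by (simp add: nn_integral_cmult_indicator)
  finally show "emeasure (scale_measure (ennreal c) M) A = emeasure (density M (\<lambda>_. ennreal c)) A"
    by simp
qed

lemma integral_scale_measure_real:
  fixes h :: "'a \<Rightarrow> real"
  assumes c: "c \<ge> 0" and h: "h \<in> borel_measurable M"
  shows "integral\<^sup>L (scale_measure (ennreal c) M) h = c * integral\<^sup>L M h"
  unfolding scale_as_density[OF c] using integral_density[of h M "\<lambda>_. c"] h c by simp

lemma T_map_meas: "T_map I \<in> borel_measurable borel"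
  unfolding T_map_def by measurable

lemma int_blowup:
  fixes h :: "real \<Rightarrow> real"
  assumes M: "sets M = sets borel" and nz: "measure M I \<noteq> 0" and h: "h \<in> borel_measurable borel"
    and I: "I \<in> sets borel"
  shows "integral\<^sup>L (blowup M I) h = (1 / measure M I) * integral\<^sup>L M (\<lambda>x. indicator I x * h (T_map I x))"
proof -
  have mn: "measure M I \<ge> 0" by simp
  have "integral\<^sup>L (blowup M I) h = (1 / measure M I) * integral\<^sup>L (distr (density M (indicator I)) borel (T_map I)) h"
    unfolding blowup_def using nz h by (simp add: integral_scale_measure_real)
  also have "integral\<^sup>L (distr (density M (indicator I)) borel (T_map I)) h
      = integral\<^sup>L (density M (indicator I)) (\<lambda>x. h (T_map I x))"
  proof (rule integral_distr)
    show "T_map I \<in> measurable (density M (indicator I)) borel"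
      using T_map_meas measurable_cong_sets[of "density M (indicator I)" borel borel borel] M by simp
  qed (rule h)
  also have "\<dots> = integral\<^sup>L (density M (\<lambda>x. ennreal (indicator I x))) (\<lambda>x. h (T_map I x))"
    by (simp add: ennreal_indicator)
  also have "\<dots> = integral\<^sup>L M (\<lambda>x. indicator I x *\<^sub>R h (T_map I x))"
  proof (rule integral_density)
    show "(\<lambda>x. h (T_map I x)) \<in> borel_measurable M"
      unfolding measurable_cong_sets[OF M refl] using measurable_comp[OF T_map_meas h] by (simp add: comp_def)
    show "(indicator I :: real \<Rightarrow> real) \<in> borel_measurable M"
      unfolding measurable_cong_sets[OF M refl] using I by simp
  qed auto
  finally show ?thesis by simp
qed

context setting
begin

lemma mu_meas: assumes J: "J \<in> D k" shows "measure (density \<nu> g) J = mm J"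
proof -
  have "emeasure (density \<nu> g) J = (\<integral>\<^sup>+ x. ennreal (g x) * indicator J x \<partial>\<nu>)"
    using D_sets[OF J] by (simp add: emeasure_density)
  also have "\<dots> = (\<integral>\<^sup>+ x. ennreal (indicator J x * g x) \<partial>\<nu>)"
    by (rule nn_integral_cong) (simp add: ennreal_indicator ennreal_mult' mult.commute split: split_indicator)
  also have "\<dots> = ennreal (mm J)" unfolding mm_def
    using int_g[OF J] gnn by (intro nn_integral_eq_integral) auto
  finally show ?thesis using mm_nn[of J] by (simp add: measure_def)
qed

definition DD :: "nat \<Rightarrow> nat \<Rightarrow> real set \<Rightarrow> real" where
  "DD m j J = (\<Sum>J'\<in>desc m j J. dd (m+j) J')"

lemma DD_nn: "J \<in> D m \<Longrightarrow> DD m j J \<ge> 0"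
  unfolding DD_def by (rule sum_nonneg) (auto intro: ee_dd(2)[OF desc_D])

lemma nu_desc: "J \<in> D m \<Longrightarrow> nu J = (\<Sum>J'\<in>desc m n J. nu J')"
  by (rule additive_desc[OF nu_add])

lemma EE_DD: assumes J: "J \<in> D m" shows "(EE m j J)^2 \<le> nu J * DD m j J"
proof -
  let ?S = "desc m j J"
  have fin: "finite ?S" by (rule desc_finite[OF J])
  have e0: "ee (m+j) J' = 0" if "J' \<in> ?S" "nu J' = 0" for J'
    using ee_dd[OF desc_D[OF that(1)]] that(2) by simp
  have "EE m j J = (\<Sum>J'\<in>?S. nu J' * (ee (m+j) J' / nu J'))"
    unfolding EE_def by (rule sum.cong) (auto simp: e0)
  also have "(\<dots>)^2 \<le> (\<Sum>J'\<in>?S. nu J') * (\<Sum>J'\<in>?S. nu J' * (ee (m+j) J' / nu J')^2)"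
    by (rule weighted_cs[OF fin nu_nn])
  also have "\<dots> \<le> nu J * DD m j J"
  proof -
    have "(\<Sum>J'\<in>?S. nu J' * (ee (m+j) J' / nu J')^2) \<le> (\<Sum>J'\<in>?S. dd (m+j) J')"
    proof (rule sum_mono)
      fix J' assume J': "J' \<in> ?S"
      note E = ee_dd[OF desc_D[OF J']]
      show "nu J' * (ee (m+j) J' / nu J')^2 \<le> dd (m+j) J'"
      proof (cases "nu J' = 0")
        case True then show ?thesis using E by simp
      next
        case False
        then have "nu J' > 0" using nu_nn[of J'] by simp
        then show ?thesis using E(1) by (simp add: power_divide field_simps power2_eq_square)
      qed
    qed
    then show ?thesis unfolding nu_desc[OF J, of j, symmetric] DD_def
      using nu_nn[of J] by (intro mult_left_mono) auto
  qed
  finally show ?thesis .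
qed

lemma geom_cs:
  fixes x :: "nat \<Rightarrow> real"
  shows "((\<Sum>j<N. (1/2)^j * x j) + (1/2)^N * y)^2 \<le> 2 * ((\<Sum>j<N. (1/2)^j * (x j)^2) + (1/2)^N * y^2)"
proof -
  define w where "w j = (if j < N then (1/2::real)^j else (1/2)^N)" for j
  define z where "z j = (if j < N then x j else y)" for j
  have s1: "(\<Sum>j\<le>N. w j * z j) = (\<Sum>j<N. (1/2)^j * x j) + (1/2)^N * y"
    by (simp add: lessThan_Suc_atMost[symmetric] w_def z_def)
  have s2: "(\<Sum>j\<le>N. w j * (z j)^2) = (\<Sum>j<N. (1/2)^j * (x j)^2) + (1/2)^N * y^2"
    by (simp add: lessThan_Suc_atMost[symmetric] w_def z_def)
  have gs: "(\<Sum>j<N. (1/2::real)^j) = 2 - 2 * (1/2)^N"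
    by (induction N) (auto simp: field_simps)
  have s3: "(\<Sum>j\<le>N. w j) \<le> 2"
    using gs by (simp add: lessThan_Suc_atMost[symmetric] w_def)
  have "(\<Sum>j\<le>N. w j * z j)^2 \<le> (\<Sum>j\<le>N. w j) * (\<Sum>j\<le>N. w j * (z j)^2)"
    by (rule weighted_cs) (auto simp: w_def)
  also have "\<dots> \<le> 2 * (\<Sum>j\<le>N. w j * (z j)^2)"
    by (rule mult_right_mono[OF s3]) (auto intro!: sum_nonneg simp: w_def)
  finally show ?thesis unfolding s1 s2 .
qed

end




lemma two_pow_half: "(2::real)^m * (1/2)^(m+j) = (1/2)^j"
  by (simp add: power_add power_one_over field_simps)

context setting
begin

lemma W1_bound:
  assumes bd: "\<And>\<psi>. 1-lipschitz_on UNIV \<psi> \<Longrightarrow> (\<forall>x. x \<notin> {0..1} \<longrightarrow> \<psi> x = 0) \<Longrightarrow>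
      \<bar>(\<integral>x. \<psi> x \<partial>m1) - (\<integral>x. \<psi> x \<partial>m2)\<bar> \<le> b"
  shows "W1 m1 m2 \<le> b" "0 \<le> W1 m1 m2"
proof -
  let ?S = "{\<bar>(\<integral>x. (\<psi>::real\<Rightarrow>real) x \<partial>m1) - (\<integral>x. \<psi> x \<partial>m2)\<bar> | \<psi>.
      1-lipschitz_on UNIV \<psi> \<and> (\<forall>x. x \<notin> {0..1} \<longrightarrow> \<psi> x = 0)}"
  have z: "1-lipschitz_on UNIV (\<lambda>_::real. 0::real)" by (simp add: lipschitz_on_def)
  have "\<exists>\<psi>::real\<Rightarrow>real. (0::real) = \<bar>(\<integral>x. \<psi> x \<partial>m1) - (\<integral>x. \<psi> x \<partial>m2)\<bar> \<and>
      1-lipschitz_on UNIV \<psi> \<and> (\<forall>x. x \<notin> {0..1} \<longrightarrow> \<psi> x = 0)"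
    by (rule exI[of _ "\<lambda>_. 0"]) (simp add: z)
  then have zin: "0 \<in> ?S" by (simp only: mem_Collect_eq)
  have ub: "\<And>s. s \<in> ?S \<Longrightarrow> s \<le> b" using bd by blast
  show "W1 m1 m2 \<le> b" unfolding W1_def by (rule cSup_least) (use zin ub in blast)+
  have bdd: "bdd_above ?S" using ub by (auto simp: bdd_above_def)
  show "0 \<le> W1 m1 m2" unfolding W1_def by (rule cSup_upper[OF zin bdd])
qed

lemma psi_props:
  fixes \<psi> :: "real \<Rightarrow> real"
  assumes L1: "1-lipschitz_on UNIV \<psi>" and sup: "\<forall>x. x \<notin> {0..1} \<longrightarrow> \<psi> x = 0"
  shows "\<And>x y. \<bar>\<psi> x - \<psi> y\<bar> \<le> \<bar>x - y\<bar>" "\<psi> \<in> borel_measurable borel" "\<And>x. \<bar>\<psi> x\<bar> \<le> 2"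
proof -
  show l: "\<bar>\<psi> x - \<psi> y\<bar> \<le> \<bar>x - y\<bar>" for x y
    using lipschitz_onD[OF L1, of x y] by (simp add: dist_real_def)
  have "continuous_on UNIV \<psi>" using L1 by (rule lipschitz_on_continuous_on)
  then show "\<psi> \<in> borel_measurable borel" by (rule borel_measurable_continuous_onI)
  show "\<bar>\<psi> x\<bar> \<le> 2" for x
  proof (cases "x \<in> {0..1}")
    case True
    have "\<psi> 2 = 0" using sup by simp
    then have "\<bar>\<psi> x\<bar> \<le> \<bar>x - 2\<bar>" using l[of x 2] by simp
    then show ?thesis using True by auto
  next
    case False then show ?thesis using sup by simp
  qed
qed

lemma alpha_bound:
  assumes I: "I \<in> D m" and np: "nu I > 0"
  shows "(alpha (density \<nu> g) \<nu> I)^2 * (measure (density \<nu> g) I)^2 / measure \<nu> I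
     \<le> 2 * (\<Sum>j<N. (1/2)^j * DD m j I) + 8 * (1/2)^N * QQ I"
proof -
  have RHS_nn: "0 \<le> 2 * (\<Sum>j<N. (1/2)^j * DD m j I) + 8 * (1/2)^N * QQ I"
    using DD_nn[OF I] QQ_nn[of I] by (intro add_nonneg_nonneg mult_nonneg_nonneg sum_nonneg) auto
  have mI: "measure (density \<nu> g) I = mm I" by (rule mu_meas[OF I])
  have nI: "measure \<nu> I = nu I" by (simp add: nu_def)
  show ?thesis
  proof (cases "mm I = 0")
    case True then show ?thesis using RHS_nn unfolding mI by simp
  next
    case False
    then have mp: "mm I > 0" using mm_nn[of I] by simp
    obtain a where a: "I = {a..<a + (1/2)^m}" using D_form[OF I] by blast
    have hp: "(0::real) < (1/2)^m" by simp
    have infI: "Inf I = a" unfolding a using hp by simp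
    have supI: "Sup I = a + (1/2)^m" unfolding a using hp by simp
    have T: "T_map I x = (x - a) * 2^m" for x
      unfolding T_map_def infI supI by (simp add: power_one_over field_simps)
    define B where "B = (\<Sum>j<N. (1/2)^j * EE m j I) + (1/2)^N * (2 * mm I)"
    have IS: "I \<in> sets borel" using D_sets[OF I] by simp
    have key: "\<bar>(\<integral>x. \<psi> x \<partial>blowup (density \<nu> g) I) - (\<integral>x. \<psi> x \<partial>blowup \<nu> I)\<bar> \<le> B / mm I"
      if L1: "1-lipschitz_on UNIV \<psi>" and sup: "\<forall>x. x \<notin> {0..1} \<longrightarrow> \<psi> x = 0" for \<psi>
    proof -
      note P = psi_props[OF L1 sup]
      define f where "f x = \<psi> (T_map I x)" for x
      have flip: "\<bar>f x - f y\<bar> \<le> 2^m * \<bar>x - y\<bar>" for x y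
      proof -
        have "\<bar>f x - f y\<bar> \<le> \<bar>T_map I x - T_map I y\<bar>" unfolding f_def by (rule P(1))
        also have "\<dots> = 2^m * \<bar>x - y\<bar>" unfolding T by (simp add: abs_mult left_diff_distrib[symmetric])
        finally show ?thesis .
      qed
      have fm: "f \<in> borel_measurable borel"
        unfolding f_def using measurable_comp[OF T_map_meas P(2)] by (simp add: comp_def)
      have fb: "\<bar>f x\<bar> \<le> 2" for x unfolding f_def by (rule P(3))
      interpret lf: lipf D \<nu> g f "2^m" 2
        by unfold_locales (use flip fm fb in auto)
      have FB: "\<bar>FF f I\<bar> \<le> B"
      proof -
        have "\<bar>FF f I\<bar> \<le> (\<Sum>j<N. 2^m * (1/2)^(m+j) * EE m j I) + 2^m * (1/2)^(m+N) * (2 * mm I)"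
          by (rule lf.FF_bound[OF I])
        also have "\<dots> = B" unfolding B_def two_pow_half by simp
        finally show ?thesis .
      qed
      have mu_sets: "sets (density \<nu> g) = sets borel" by simp
      have i1: "(\<integral>x. \<psi> x \<partial>blowup (density \<nu> g) I) = (1 / mm I) * integral\<^sup>L \<nu> (\<lambda>x. indicator I x * (f x * g x))"
      proof -
        have "(\<integral>x. \<psi> x \<partial>blowup (density \<nu> g) I) =
            (1 / mm I) * integral\<^sup>L (density \<nu> g) (\<lambda>x. indicator I x * f x)"
          using int_blowup[OF mu_sets _ P(2) IS] mI False by (simp add: f_def)
        also have "integral\<^sup>L (density \<nu> g) (\<lambda>x. indicator I x * f x) = integral\<^sup>L \<nu> (\<lambda>x. g x *\<^sub>R (indicator I x * f x))"
        proof (rule integral_density)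
          show "(\<lambda>x. indicator I x * f x) \<in> borel_measurable \<nu>"
            using borel_measurable_indicator[OF D_sets[OF I]] lf.f_meas by (rule borel_measurable_times)
        qed (auto simp: gnn)
        finally show ?thesis by (simp add: algebra_simps)
      qed
      have i2: "(\<integral>x. \<psi> x \<partial>blowup \<nu> I) = (1 / nu I) * integral\<^sup>L \<nu> (\<lambda>x. indicator I x * f x)"
        using int_blowup[OF sets_nu _ P(2) IS] nI np by (simp add: f_def)
      have diff: "(\<integral>x. \<psi> x \<partial>blowup (density \<nu> g) I) - (\<integral>x. \<psi> x \<partial>blowup \<nu> I) = FF f I / mm I"
        unfolding i1 i2 FF_def aa_def using mp np by (simp add: field_simps)
      show ?thesis unfolding diff using FB mp by (simp add: divide_right_mono)
    qed
    have Wb: "alpha (density \<nu> g) \<nu> I \<le> B / mm I" "0 \<le> alpha (density \<nu> g) \<nu> I"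
      unfolding alpha_def using W1_bound[of _ _ "B / mm I", OF key] by auto
    have am: "alpha (density \<nu> g) \<nu> I * mm I \<le> B" using Wb(1) mp by (simp add: field_simps)
    have am0: "0 \<le> alpha (density \<nu> g) \<nu> I * mm I" using Wb(2) mp by simp
    have "(alpha (density \<nu> g) \<nu> I)^2 * (mm I)^2 = (alpha (density \<nu> g) \<nu> I * mm I)^2"
      by (simp add: power_mult_distrib)
    also have "\<dots> \<le> B^2" using am am0 by (intro power_mono) auto
    also have "\<dots> \<le> 2 * ((\<Sum>j<N. (1/2)^j * (EE m j I)^2) + (1/2)^N * (2 * mm I)^2)"
      unfolding B_def by (rule geom_cs)
    also have "\<dots> \<le> 2 * ((\<Sum>j<N. (1/2)^j * (nu I * DD m j I)) + (1/2)^N * (2 * mm I)^2)"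
      using EE_DD[OF I] by (intro mult_left_mono add_right_mono sum_mono) auto
    also have "\<dots> = nu I * (2 * (\<Sum>j<N. (1/2)^j * DD m j I) + 8 * (1/2)^N * QQ I)"
      using np by (simp add: QQ_def sum_distrib_left field_simps power2_eq_square)
    finally have "(alpha (density \<nu> g) \<nu> I)^2 * (mm I)^2 \<le> nu I * (2 * (\<Sum>j<N. (1/2)^j * DD m j I) + 8 * (1/2)^N * QQ I)" .
    then show ?thesis unfolding mI nI using np by (simp add: field_simps)
  qed
qed

end



context setting
begin

definition lev :: "real set \<Rightarrow> nat" where "lev I = (SOME k. I \<in> D k)"
definition anc0 :: "real set \<Rightarrow> real set" where "anc0 I = (SOME J. J \<in> D 0 \<and> I \<subseteq> J)"

lemma lev: "I \<in> D k \<Longrightarrow> I \<in> D (lev I)"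
  unfolding lev_def by (rule someI)

lemma anc0: assumes "I \<in> D k" shows "anc0 I \<in> D 0" "I \<subseteq> anc0 I"
proof -
  have "\<exists>J. J \<in> D 0 \<and> I \<subseteq> J" using anc[of I 0 k] assms by auto
  then have "anc0 I \<in> D 0 \<and> I \<subseteq> anc0 I" unfolding anc0_def by (rule someI_ex)
  then show "anc0 I \<in> D 0" "I \<subseteq> anc0 I" by auto
qed

lemma in_desc: "I \<in> D k \<Longrightarrow> I \<in> desc 0 k (anc0 I)"
  unfolding desc_def using anc0[of I k] by auto

lemma QQ_desc: assumes J: "J \<in> D m"
  shows "(\<Sum>J'\<in>desc m n J. QQ J') = QQ J + (\<Sum>i<n. DD m i J)"
proof (induction n)
  case 0 then show ?case by (simp add: desc_0[OF J])
next
  case (Suc n)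
  have "(\<Sum>J'\<in>desc m (n+1) J. QQ J') = (\<Sum>I\<in>desc m n J. \<Sum>J'\<in>desc (m+n) 1 I. QQ J')"
    by (rule sum_desc[OF J])
  also have "\<dots> = (\<Sum>I\<in>desc m n J. QQ I + dd (m+n) I)"
    by (rule sum.cong[OF refl]) (simp add: dd_def)
  also have "\<dots> = (\<Sum>I\<in>desc m n J. QQ I) + DD m n J"
    by (simp add: sum.distrib DD_def)
  finally show ?case using Suc by simp
qed

lemma DD_sum_le: assumes J: "J \<in> D m" shows "(\<Sum>i<n. DD m i J) \<le> q2 J"
proof -
  have "QQ J + (\<Sum>i<n. DD m i J) = (\<Sum>J'\<in>desc m n J. QQ J')" by (rule QQ_desc[OF J, symmetric])
  also have "\<dots> \<le> (\<Sum>J'\<in>desc m n J. q2 J')" by (rule sum_mono) (rule QQ_le[OF desc_D])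
  also have "\<dots> = q2 J" by (rule additive_desc[OF q2_add J, symmetric])
  finally show ?thesis using QQ_nn[of J] by linarith
qed

lemma DD_comp: assumes J: "J \<in> D 0"
  shows "(\<Sum>I\<in>desc 0 k J. DD k j I) = DD 0 (k+j) J"
proof -
  have "DD 0 (k+j) J = (\<Sum>J'\<in>desc 0 (k+j) J. dd (0+(k+j)) J')" by (simp add: DD_def)
  also have "\<dots> = (\<Sum>I\<in>desc 0 k J. \<Sum>J'\<in>desc (0+k) j I. dd (0+(k+j)) J')" by (rule sum_desc[OF J])
  also have "\<dots> = (\<Sum>I\<in>desc 0 k J. DD k j I)" by (simp add: DD_def)
  finally show ?thesis by simp
qed

lemma top_sum: assumes S: "finite S" "S \<subseteq> D 0"
  shows "(\<Sum>J\<in>S. q2 J) \<le> integral\<^sup>L \<nu> (\<lambda>x. (g x)^2)"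
proof -
  have "(\<Sum>J\<in>S. q2 J) = integral\<^sup>L \<nu> (\<lambda>x. \<Sum>J\<in>S. indicator J x * (g x)^2)"
  proof -
    have "\<And>J. J \<in> S \<Longrightarrow> integrable \<nu> (\<lambda>x. indicator J x * (g x)^2)" using int_g2 S by blast
    then show ?thesis unfolding q2_def using Bochner_Integration.integral_sum[where I=S and M=\<nu> and f="\<lambda>J x. indicator J x * (g x)^2"] by simp
  qed
  also have "\<dots> \<le> integral\<^sup>L \<nu> (\<lambda>x. (g x)^2)"
  proof (rule integral_mono)
    show "integrable \<nu> (\<lambda>x. \<Sum>J\<in>S. indicator J x * (g x)^2)"
      using Bochner_Integration.integrable_sum[where I=S and M=\<nu> and f="\<lambda>J x. indicator J x * (g x)^2"] int_g2 S by blast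
    show "integrable \<nu> (\<lambda>x. (g x)^2)" by (rule g2)
    fix x
    have disj: "disjoint_family_on (\<lambda>J. J) S"
      unfolding disjoint_family_on_def using D_disj S(2) by blast
    show "(\<Sum>J\<in>S. indicator J x * (g x)^2) \<le> (g x)^2"
    proof (cases "\<exists>J\<in>S. x \<in> J")
      case True
      then obtain J where J: "J \<in> S" "x \<in> J" by blast
      have "(\<Sum>J\<in>S. (g x)^2 * indicator J x) = (g x)^2"
        by (rule sum_indicator_disjoint_family[OF disj J(2) S(1) J(1)])
      then show ?thesis by (simp add: mult.commute)
    next
      case False
      then have "(\<Sum>J\<in>S. indicator J x * (g x)^2) = 0" by (intro sum.neutral) auto
      then show ?thesis by simp
    qed
  qed
  finally show ?thesis .
qed

lemma F_bound: assumes F: "finite F" "\<And>I. I \<in> F \<Longrightarrow> \<exists>k. I \<in> D k"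
  shows "(\<Sum>I\<in>F. DD (lev I) j I) \<le> integral\<^sup>L \<nu> (\<lambda>x. (g x)^2)"
proof -
  have FD: "I \<in> D (lev I)" if "I \<in> F" for I using F(2)[OF that] lev by blast
  define K where "K = (\<Sum>I\<in>F. lev I)"
  have levK: "lev I \<le> K" if "I \<in> F" for I unfolding K_def using F(1) that by (intro member_le_sum) auto
  define S where "S = anc0 ` F"
  have S: "finite S" "S \<subseteq> D 0" unfolding S_def using F(1) anc0(1)[OF FD] by auto
  have "(\<Sum>I\<in>F. DD (lev I) j I) = (\<Sum>J0\<in>S. \<Sum>I\<in>{I \<in> F. anc0 I = J0}. DD (lev I) j I)"
    unfolding S_def by (rule sum.image_gen[OF F(1)])
  also have "\<dots> \<le> (\<Sum>J0\<in>S. q2 J0)"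
  proof (rule sum_mono)
    fix J0 assume J0: "J0 \<in> S"
    then have J0D: "J0 \<in> D 0" using S by auto
    define G where "G = {I \<in> F. anc0 I = J0}"
    have G: "finite G" unfolding G_def using F(1) by simp
    have "(\<Sum>I\<in>G. DD (lev I) j I) = (\<Sum>k\<in>lev ` G. \<Sum>I\<in>{I \<in> G. lev I = k}. DD (lev I) j I)"
      by (rule sum.image_gen[OF G])
    also have "\<dots> \<le> (\<Sum>k\<in>lev ` G. \<Sum>I\<in>desc 0 k J0. DD k j I)"
    proof (rule sum_mono)
      fix k assume "k \<in> lev ` G"
      have "(\<Sum>I\<in>{I \<in> G. lev I = k}. DD (lev I) j I) = (\<Sum>I\<in>{I \<in> G. lev I = k}. DD k j I)"
        by (rule sum.cong) auto
      also have "\<dots> \<le> (\<Sum>I\<in>desc 0 k J0. DD k j I)"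
      proof (rule sum_mono2)
        show "finite (desc 0 k J0)" by (rule desc_finite[OF J0D])
        show "{I \<in> G. lev I = k} \<subseteq> desc 0 k J0"
        proof
          fix I assume "I \<in> {I \<in> G. lev I = k}"
          then have "I \<in> F" "anc0 I = J0" "lev I = k" unfolding G_def by auto
          then show "I \<in> desc 0 k J0" using in_desc[OF FD[OF \<open>I \<in> F\<close>]] by simp
        qed
        show "0 \<le> DD k j I" if "I \<in> desc 0 k J0 - {I \<in> G. lev I = k}" for I
          using DD_nn[OF desc_D[of I 0 k J0]] that by simp
      qed
      finally show "(\<Sum>I\<in>{I \<in> G. lev I = k}. DD (lev I) j I) \<le> (\<Sum>I\<in>desc 0 k J0. DD k j I)" .
    qed
    also have "\<dots> = (\<Sum>k\<in>lev ` G. DD 0 (k+j) J0)"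
      by (rule sum.cong[OF refl]) (rule DD_comp[OF J0D])
    also have "\<dots> = (\<Sum>n\<in>(\<lambda>k. k+j) ` lev ` G. DD 0 n J0)"
      by (subst sum.reindex) (auto simp: inj_on_def)
    also have "\<dots> \<le> (\<Sum>n<K+j+1. DD 0 n J0)"
    proof (rule sum_mono2)
      show "(\<lambda>k. k+j) ` lev ` G \<subseteq> {..<K+j+1}" using levK unfolding G_def by fastforce
      show "0 \<le> DD 0 n J0" for n by (rule DD_nn[OF J0D])
    qed auto
    also have "\<dots> \<le> q2 J0" by (rule DD_sum_le[OF J0D])
    finally show "(\<Sum>I\<in>{I \<in> F. anc0 I = J0}. DD (lev I) j I) \<le> q2 J0" unfolding G_def .
  qed
  also have "\<dots> \<le> integral\<^sup>L \<nu> (\<lambda>x. (g x)^2)" by (rule top_sum[OF S])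
  finally show ?thesis .
qed

definition tt :: "real set \<Rightarrow> real" where
  "tt I = (alpha (density \<nu> g) \<nu> I)^2 * (measure (density \<nu> g) I)^2 / measure \<nu> I"

lemma tt_nn: "tt I \<ge> 0" unfolding tt_def by simp

lemma fin_bound_N: assumes F: "finite F" "\<And>I. I \<in> F \<Longrightarrow> (\<exists>k. I \<in> D k) \<and> nu I > 0"
  shows "(\<Sum>I\<in>F. tt I) \<le> 4 * integral\<^sup>L \<nu> (\<lambda>x. (g x)^2) + 8 * (1/2)^N * (\<Sum>I\<in>F. QQ I)"
proof -
  have FD: "I \<in> D (lev I)" if "I \<in> F" for I using F(2)[OF that] lev by blast
  let ?G = "integral\<^sup>L \<nu> (\<lambda>x. (g x)^2)"
  have G0: "0 \<le> ?G" by (rule integral_nonneg_AE) auto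
  have "(\<Sum>I\<in>F. tt I) \<le> (\<Sum>I\<in>F. 2 * (\<Sum>j<N. (1/2)^j * DD (lev I) j I) + 8 * (1/2)^N * QQ I)"
    by (rule sum_mono) (use alpha_bound[OF FD] F(2) in \<open>auto simp: tt_def\<close>)
  also have "\<dots> = 2 * (\<Sum>j<N. (1/2)^j * (\<Sum>I\<in>F. DD (lev I) j I)) + 8 * (1/2)^N * (\<Sum>I\<in>F. QQ I)"
    by (simp add: sum.distrib sum_distrib_left sum.swap[of _ F])
  also have "\<dots> \<le> 2 * (\<Sum>j<N. (1/2)^j * ?G) + 8 * (1/2)^N * (\<Sum>I\<in>F. QQ I)"
    using F_bound[OF F(1)] F(2) by (intro add_right_mono mult_left_mono sum_mono) auto
  also have "(\<Sum>j<N. (1/2::real)^j * ?G) = (2 - 2 * (1/2)^N) * ?G"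
  proof -
    have gs: "(\<Sum>j<N. (1/2::real)^j) = 2 - 2 * (1/2)^N" by (induction N) (auto simp: field_simps)
    show ?thesis unfolding sum_distrib_right[symmetric] gs ..
  qed
  also have "2 * ((2 - 2 * (1/2)^N) * ?G) \<le> 4 * ?G" using G0 by (simp add: algebra_simps)
  finally show ?thesis by linarith
qed

lemma fin_bound: assumes F: "finite F" "\<And>I. I \<in> F \<Longrightarrow> (\<exists>k. I \<in> D k) \<and> nu I > 0"
  shows "(\<Sum>I\<in>F. tt I) \<le> 4 * integral\<^sup>L \<nu> (\<lambda>x. (g x)^2)"
proof (rule ccontr)
  let ?G = "integral\<^sup>L \<nu> (\<lambda>x. (g x)^2)"
  let ?c = "8 * (\<Sum>I\<in>F. QQ I) + 1"
  assume "\<not> ?thesis"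
  then have d: "(\<Sum>I\<in>F. tt I) - 4 * ?G > 0" by simp
  have cp: "?c > 0" using QQ_nn by (simp add: sum_nonneg add_nonneg_pos)
  obtain N where N: "(1/2::real)^N < ((\<Sum>I\<in>F. tt I) - 4 * ?G) / ?c"
    using real_arch_pow_inv[of "((\<Sum>I\<in>F. tt I) - 4 * ?G) / ?c" "1/2"] d cp by auto
  have "8 * (1/2)^N * (\<Sum>I\<in>F. QQ I) \<le> (1/2)^N * ?c" by (simp add: algebra_simps)
  also have "\<dots> < (\<Sum>I\<in>F. tt I) - 4 * ?G" using N cp by (simp add: field_simps)
  finally show False using fin_bound_N[OF F, of N] by linarith
qed

end

theorem mainTheorem11:
  "\<exists>C::real. \<forall>(D::nat \<Rightarrow> real set set) (\<nu>::real measure) (g::real \<Rightarrow> real).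
     gen_dyadic_system D \<longrightarrow> radon_measure \<nu> \<longrightarrow> dyadically_doubling D \<nu> \<longrightarrow>
     g \<in> borel_measurable borel \<longrightarrow> (\<forall>x. g x \<ge> 0) \<longrightarrow> integrable \<nu> (\<lambda>x. (g x)\<^sup>2) \<longrightarrow>
     (\<Sum>\<^sub>\<infinity> I \<in> {I. (\<exists>k. I \<in> D k) \<and> measure \<nu> I > 0}.
        ennreal ((alpha (density \<nu> g) \<nu> I)\<^sup>2 * (measure (density \<nu> g) I)\<^sup>2 / measure \<nu> I))
     \<le> ennreal (C * (\<integral>x. (g x)\<^sup>2 \<partial>\<nu>))"
proof (intro exI[of _ 4] allI impI)
  fix D :: "nat \<Rightarrow> real set set" and \<nu> :: "real measure" and g :: "real \<Rightarrow> real"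
  assume a: "gen_dyadic_system D" "radon_measure \<nu>" "dyadically_doubling D \<nu>"
    "g \<in> borel_measurable borel" "\<forall>x. g x \<ge> 0" "integrable \<nu> (\<lambda>x. (g x)\<^sup>2)"
  interpret s: setting D \<nu> g
    by unfold_locales (use a in auto)
  show "(\<Sum>\<^sub>\<infinity> I \<in> {I. (\<exists>k. I \<in> D k) \<and> measure \<nu> I > 0}.
        ennreal ((alpha (density \<nu> g) \<nu> I)\<^sup>2 * (measure (density \<nu> g) I)\<^sup>2 / measure \<nu> I))
     \<le> ennreal (4 * (\<integral>x. (g x)\<^sup>2 \<partial>\<nu>))"
  proof (rule infsum_le_finite_sums)
    show "(\<lambda>I. ennreal ((alpha (density \<nu> g) \<nu> I)\<^sup>2 * (measure (density \<nu> g) I)\<^sup>2 / measure \<nu> I))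
      summable_on {I. (\<exists>k. I \<in> D k) \<and> measure \<nu> I > 0}" by (rule nonneg_summable_on_complete) simp
    fix F assume F: "finite F" "F \<subseteq> {I. (\<exists>k. I \<in> D k) \<and> measure \<nu> I > 0}"
    have "(\<Sum>I\<in>F. ennreal ((alpha (density \<nu> g) \<nu> I)\<^sup>2 * (measure (density \<nu> g) I)\<^sup>2 / measure \<nu> I))
        = ennreal (\<Sum>I\<in>F. s.tt I)"
      unfolding s.tt_def by (rule sum_ennreal) simp
    also have "\<dots> \<le> ennreal (4 * (\<integral>x. (g x)\<^sup>2 \<partial>\<nu>))"
      by (rule ennreal_leI, rule s.fin_bound[OF F(1)]) (use F(2) in \<open>auto simp: s.nu_def\<close>)
    finally show "(\<Sum>I\<in>F. ennreal ((alpha (density \<nu> g) \<nu> I)\<^sup>2 * (measure (density \<nu> g) I)\<^sup>2 / measure \<nu> I))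
        \<le> ennreal (4 * (\<integral>x. (g x)\<^sup>2 \<partial>\<nu>))" .
  qed
qed


end
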